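(* Let $F$ be a number field, $v$ a non-archimedean place of $F$, and $(m,u)\in\mathcal{O}_F\times\mathcal{O}_F^\times$ with $m^2-4u\notin F^2$. Let $\gamma_{m,u}=\begin{pmatrix}0&1\\-u&m\end{pmatrix}$ and let $\mathrm{G}_{\gamma_{m,u}}(F_v)$ be its centralizer in $\mathrm{GL}_2(F_v)$. If there is $\alpha\in F_v$ with $\alpha^2-m\alpha+u=0$, let $\alpha_1,\alpha_2$ be the roots of $x^2-mx+u$ in $F_v$; then \[ \left\{\begin{pmatrix}1&u^{-1}\alpha_i\\ \alpha_i&1\end{pmatrix}: i\in\{1,2\}\right\}\cup\left\{\begin{pmatrix}1&x\\ \alpha_i&0\end{pmatrix}: x\in F_v^\times,\ i\in\{1,2\}\right\}\cup\left\{\begin{pmatrix}1&x\\0&y\end{pmatrix}: x\in F_v,\ y\in F_v^\times\right\} \] is a set of representatives of $\mathrm{G}_{\gamma_{m,u}}(F_v)\backslash\mathrm{GL}_2(F_v)$. If there is no $\alpha\in F_v$ with $\alpha^2-m\alpha+u=0$, then $\left\{\begin{pmatrix}1&x\\0&y\end{pmatrix}: x\in F_v,\ y\in F_v^\times\right\}$ is a set of representatives of $\mathrm{G}_{\gamma_{m,u}}(F_v)\backslash\mathrm{GL}_2(F_v)$.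
   Context: $F_v$ is the completion of $F$ at $v$ and $\mathcal{O}_F$ the ring of integers of $F$. *)

theory Defs
  imports "HOL-Analysis.Analysis"
begin

definition mat2 :: "'a::zero \<Rightarrow> 'a \<Rightarrow> 'a \<Rightarrow> 'a \<Rightarrow> 'a^2^2" where
  "mat2 a b c d = (\<chi> i j. if i = 1 then (if j = 1 then a else b) else (if j = 1 then c else d))"

definition GL2 :: "(('a::field)^2^2) set" where
  "GL2 = {g. invertible g}"

definition centralizer_GL2 :: "('a::field)^2^2 \<Rightarrow> ('a^2^2) set" where
  "centralizer_GL2 \<gamma> = {g \<in> GL2. g ** \<gamma> = \<gamma> ** g}"

definition gamma_mu :: "'a::field \<Rightarrow> 'a \<Rightarrow> 'a^2^2" where
  "gamma_mu m u = mat2 0 1 (- u) m"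

definition is_rep_set :: "(('a::field)^2^2) set \<Rightarrow> ('a^2^2) set \<Rightarrow> bool" where
  "is_rep_set H R \<longleftrightarrow> R \<subseteq> GL2 \<and>
     (\<forall>g \<in> GL2. \<exists>!r. r \<in> R \<and> (\<exists>h \<in> H. r = h ** g))"

end

theory Submission
  imports Defs
begin

lemma mat2_nth [simp]:
  "mat2 a b c d $ 1 $ 1 = a" "mat2 a b c d $ 1 $ 2 = b"
  "mat2 a b c d $ 2 $ 1 = c" "mat2 a b c d $ 2 $ 2 = d"
  by (simp_all add: mat2_def)

lemma mat2_eq_iff: "mat2 a b c d = mat2 a' b' c' d' \<longleftrightarrow> a = a' \<and> b = b' \<and> c = c' \<and> d = d'"
  by (auto simp: vec_eq_iff forall_2 mat2_def)

lemma mat2_eta: "(g::'a::zero^2^2) = mat2 (g$1$1) (g$1$2) (g$2$1) (g$2$2)"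
  by (simp add: vec_eq_iff forall_2)

lemma mat2_mult: "mat2 a b c d ** mat2 e f g (h::'a::comm_ring_1) =
   mat2 (a*e+b*g) (a*f+b*h) (c*e+d*g) (c*f+d*h)"
  by (simp add: vec_eq_iff forall_2 matrix_matrix_mult_def sum_2)

lemma mat2_det: "det (mat2 a b c (d::'a::comm_ring_1)) = a*d - b*c"
  by (simp add: det_2)

lemma mat2_GL2: "mat2 a b c (d::'a::field) \<in> GL2 \<longleftrightarrow> a*d - b*c \<noteq> 0"
  by (simp add: GL2_def invertible_det_nz mat2_det)

lemma centralizer_iff:
  fixes m u :: "'a::field"
  shows "h \<in> centralizer_GL2 (gamma_mu m u) \<longleftrightarrow>
    (\<exists>a b. h = mat2 a b (-u*b) (a+m*b) \<and> a*(a+m*b) + u*b*b \<noteq> 0)"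
proof -
  obtain p q r s where h: "h = mat2 p q r s" using mat2_eta by blast
  show ?thesis
    unfolding h by (auto simp: centralizer_GL2_def gamma_mu_def mat2_mult mat2_eq_iff mat2_GL2 algebra_simps) (metis add.assoc eq_neg_iff_add_eq_0)+
qed

lemma cent_mult:
  "h1 \<in> centralizer_GL2 g \<Longrightarrow> h2 \<in> centralizer_GL2 g \<Longrightarrow> h1 ** h2 \<in> centralizer_GL2 g"
  unfolding centralizer_GL2_def GL2_def
  by (auto simp: invertible_mult) (metis matrix_mul_assoc)

lemma cent_inv:
  assumes "h \<in> centralizer_GL2 g"
  shows "\<exists>h'\<in>centralizer_GL2 g. h' ** h = mat 1"
proof -
  from assms have inv: "invertible h" and c: "h ** g = g ** h" unfolding centralizer_GL2_def GL2_def by auto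
  then obtain h' where 1: "h ** h' = mat 1" and 2: "h' ** h = mat 1" unfolding invertible_def by blast
  have "h' ** g = h' ** g ** (h ** h')" using 1 by simp
  also have "\<dots> = h' ** (g ** h) ** h'" by (simp add: matrix_mul_assoc)
  also have "\<dots> = h' ** (h ** g) ** h'" using c by simp
  also have "\<dots> = (h' ** h) ** g ** h'" by (simp add: matrix_mul_assoc)
  also have "\<dots> = g ** h'" using 2 by simp
  finally have "h' ** g = g ** h'" .
  moreover have "invertible h'" using 1 2 unfolding invertible_def by blast
  ultimately show ?thesis using 2 unfolding centralizer_GL2_def GL2_def by blast
qed

lemma rep_set_intro:
  fixes c :: "'a::field^2^2" and R :: "('a^2^2) set"
  assumes "R \<subseteq> GL2"
    and ex: "\<And>g. g \<in> GL2 \<Longrightarrow> \<exists>r\<in>R. \<exists>h\<in>centralizer_GL2 c. r = h ** g"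
    and un: "\<And>r1 r2 h. r1 \<in> R \<Longrightarrow> r2 \<in> R \<Longrightarrow> h \<in> centralizer_GL2 c \<Longrightarrow> r1 = h ** r2 \<Longrightarrow> r1 = r2"
  shows "is_rep_set (centralizer_GL2 c) R"
  unfolding is_rep_set_def
proof (intro conjI ballI assms(1))
  fix g :: "'a^2^2" assume g: "g \<in> GL2"
  from ex[OF g] obtain r h where r: "r \<in> R" "h \<in> centralizer_GL2 c" "r = h ** g" by blast
  show "\<exists>!r. r \<in> R \<and> (\<exists>h\<in>centralizer_GL2 c. r = h ** g)"
  proof (rule ex1I[of _ r])
    show "r \<in> R \<and> (\<exists>h\<in>centralizer_GL2 c. r = h ** g)" using r by blast
  next
    fix r' assume "r' \<in> R \<and> (\<exists>h\<in>centralizer_GL2 c. r' = h ** g)"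
    then obtain h1 where r': "r' \<in> R" "h1 \<in> centralizer_GL2 c" "r' = h1 ** g" by blast
    obtain h' where h': "h' \<in> centralizer_GL2 c" "h' ** h = mat 1" using cent_inv r(2) by blast
    have "g = h' ** r" using h' r(3) by (simp add: matrix_mul_assoc)
    hence "r' = (h1 ** h') ** r" using r'(3) by (simp add: matrix_mul_assoc)
    thus "r' = r" using un[OF r'(1) r(1)] cent_mult[OF r'(2) h'(1)] by blast
  qed
qed


lemma root_facts:
  fixes m u al :: "'a::field"
  assumes u: "u \<noteq> 0" and d: "m^2 - 4*u \<noteq> 0" and r: "al^2 - m*al + u = 0"
  shows "al \<noteq> 0" "m - al \<noteq> 0" "al * (m - al) = u" "m - 2*al \<noteq> 0"
proof -
  show "al \<noteq> 0" using u r by auto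
  show 3: "al * (m - al) = u" using r by (simp add: algebra_simps power2_eq_square)
  show "m - al \<noteq> 0" using 3 u by auto
  have "(m - 2*al)^2 = m^2 - 4*u + 4*(al^2 - m*al + u)" by (simp add: algebra_simps power2_eq_square)
  then have "(m - 2*al)^2 = m^2 - 4*u" using r by simp
  then show "m - 2*al \<noteq> 0" using d by auto
qed

lemma firstcol:
  fixes m u al a b :: "'a::field"
  assumes r: "al^2 - m*al + u = 0"
  shows "-u*b + (a+m*b)*al = al*(a+b*al)"
proof -
  have hu: "u = m*al - al^2" using r by (simp add: algebra_simps)
  show ?thesis unfolding hu by (simp add: algebra_simps power2_eq_square)
qed

lemma detroot:
  fixes m u al a b :: "'a::field"
  assumes r: "al^2 - m*al + u = 0"
  shows "a*(a+m*b) + u*b*b = (a+b*al)*(a+b*(m-al))"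
proof -
  have hu: "u = m*al - al^2" using r by (simp add: algebra_simps)
  show ?thesis unfolding hu by (simp add: algebra_simps power2_eq_square)
qed


lemma uniqA:
  fixes m u a b x y al :: "'a::field"
  assumes u: "u \<noteq> 0" and hd: "a*(a+m*b) + u*b*b \<noteq> 0"
    and eq: "r1 = mat2 a b (-u*b) (a+m*b) ** mat2 1 x 0 y"
    and r1: "r1 = mat2 1 x' c y'" and c: "c = 0 \<or> c^2 - m*c + u = 0 \<and> c \<noteq> 0"
  shows "r1 = mat2 1 x 0 y"
proof -
  from eq r1 have e: "a = 1" "-u*b = c" "a*x+b*y = x'" "-u*b*x+(a+m*b)*y = y'"
    by (simp_all add: mat2_mult mat2_eq_iff)
  show ?thesis
  proof (cases "c = 0")
    case True
    then have "b = 0" using e u by simp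
    then show ?thesis using e r1 True by simp
  next
    case False
    with c have rt: "c^2 - m*c + u = 0" by simp
    have "u * (a*(a+m*b) + u*b*b) = u + m*(u*b) + (u*b)*(u*b)" using e by (simp add: algebra_simps)
    also have "\<dots> = c^2 - m*c + u" using e(2)[symmetric] by (simp add: algebra_simps power2_eq_square)
    finally show ?thesis using rt hd u by simp
  qed
qed


lemma uniqBC:
  fixes m u a b al c y1 z1 y2 z2 :: "'a::field"
  assumes u: "u \<noteq> 0" and d: "m^2 - 4*u \<noteq> 0" and hd: "a*(a+m*b) + u*b*b \<noteq> 0"
    and rt: "al^2 - m*al + u = 0"
    and eq: "r1 = mat2 a b (-u*b) (a+m*b) ** r2"
    and r2: "r2 = mat2 1 y2 al z2" and t2: "(y2 = inverse u * al \<and> z2 = 1) \<or> (y2 \<noteq> 0 \<and> z2 = 0)"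
    and r1: "r1 = mat2 1 y1 c z1"
    and t1: "c = 0 \<or> ((y1 = inverse u * c \<and> z1 = 1) \<or> (y1 \<noteq> 0 \<and> z1 = 0))"
  shows "r1 = r2"
proof -
  note rf = root_facts[OF u d rt]
  from eq r1 r2 have e: "a + b*al = 1" "a*y2+b*z2 = y1" "-u*b + (a+m*b)*al = c" "-u*b*y2+(a+m*b)*z2 = z1"
    by (simp_all add: mat2_mult mat2_eq_iff)
  have "c = al" using e(3) e(1) firstcol[OF rt, of b a] by simp
  then have c: "c \<noteq> 0" using rf by simp
  have a: "a = 1 - b*al" using e(1) by (simp add: algebra_simps)
  show ?thesis
  proof (cases "y2 = inverse u * al \<and> z2 = 1")
    case True
    note T = this
    have z1: "z1 = a + m*b - b*al" using e(4) T u by (simp add: field_simps)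
    show ?thesis
    proof (cases "z1 = 1")
      case True
      then have "b * (m - 2*al) = 0" using z1 a by (simp add: algebra_simps)
      then have "b = 0" using rf by simp
      then show ?thesis using eq r2 a by (simp add: mat2_mult)
    next
      case False
      then have "z1 = 0" using t1 c by auto
      then have "a + b*(m-al) = 0" using z1 by (simp add: algebra_simps)
      then show ?thesis using hd detroot[OF rt, of a b] by simp
    qed
  next
    case False
    then have T: "y2 \<noteq> 0" "z2 = 0" using t2 by auto
    have z1: "z1 = -u*b*y2" using e(4) T by simp
    have y1: "y1 = a*y2" using e(2) T by simp
    show ?thesis
    proof (cases "z1 = 1")
      case True
      then have "y1 = inverse u * al" using t1 c \<open>c = al\<close> by auto
      then have "u * (a*y2) = al" using y1 u by (simp add: field_simps)
      moreover have "u*(b*al*y2) = - al"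
      proof -
        have "u*b*y2 = -1" using True z1 by (simp add: minus_equation_iff)
        moreover have "u*(b*al*y2) = al*(u*b*y2)" by (simp add: ac_simps)
        ultimately show ?thesis by simp
      qed
      ultimately have "u * ((a + b*al) * y2) = 0" by (simp add: algebra_simps)
      then show ?thesis using e(1) u T by simp
    next
      case False
      then have "z1 = 0" using t1 c by auto
      then have "b = 0" using z1 u T by simp
      then show ?thesis using eq r2 a by (simp add: mat2_mult)
    qed
  qed
qed


lemma eigact:
  fixes a b al be p t w :: "'a::field"
  shows "mat2 a b (-(al*be)*b) (a+(al+be)*b) ** mat2 p (t+w) (p*al) (t*al+w*be) =
    mat2 ((a+b*al)*p) ((a+b*al)*t+(a+b*be)*w) ((a+b*al)*p*al) ((a+b*al)*t*al + (a+b*be)*w*be)"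
  by (simp add: mat2_mult mat2_eq_iff algebra_simps)

lemma exist_generic:
  fixes m u p q r z :: "'a::field"
  assumes u: "u \<noteq> 0" and D: "p*z - q*r \<noteq> 0" and N: "r^2 - m*p*r + u*p^2 \<noteq> 0"
  shows "\<exists>a b x y. a*(a+m*b)+u*b*b \<noteq> 0 \<and> y \<noteq> 0 \<and>
     mat2 1 x 0 y = mat2 a b (-u*b) (a+m*b) ** mat2 p q r z"
proof -
  define n where "n = r^2 - m*p*r + u*p^2"
  define a where "a = (u*p - m*r)/n"
  define b where "b = r/n"
  have n: "n \<noteq> 0" using N n_def by simp
  have key: "(u*p - m*r)*(u*p - m*r + m*r) + u*r*r = u*n"
    unfolding n_def by (simp add: algebra_simps power2_eq_square)
  have dh: "a*(a+m*b)+u*b*b = u/n"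
  proof -
    have "a*(a+m*b)+u*b*b = ((u*p - m*r)*(u*p - m*r + m*r) + u*r*r)/(n*n)"
      unfolding a_def b_def using n by (simp add: field_simps)
    also have "\<dots> = u/n" unfolding key using n by simp
    finally show ?thesis .
  qed
  have k1: "(u*p - m*r)*p + r*r = n" unfolding n_def by (simp add: algebra_simps power2_eq_square)
  have k2: "-u*r*p + ((u*p - m*r) + m*r)*r = 0" by (simp add: algebra_simps)
  have e1: "a*p + b*r = 1" unfolding a_def b_def using n k1 by (simp add: field_simps)
  have e2: "-u*b*p + (a+m*b)*r = 0" unfolding a_def b_def using n k2 by (simp add: field_simps)
  have prod: "mat2 a b (-u*b) (a+m*b) ** mat2 p q r z =
     mat2 1 (a*q+b*z) 0 (-u*b*q + (a+m*b)*z)"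
    unfolding mat2_mult mat2_eq_iff using e1 e2 by simp
  have "det (mat2 a b (-u*b) (a+m*b) ** mat2 p q r z) = (u/n) * (p*z-q*r)"
    by (simp add: det_mul mat2_det dh[symmetric] algebra_simps)
  then have "-u*b*q + (a+m*b)*z \<noteq> 0" using prod u n D by (simp add: mat2_det)
  then show ?thesis using prod dh u n
    by (intro exI[of _ a] exI[of _ b] exI[of _ "a*q+b*z"] exI[of _ "-u*b*q + (a+m*b)*z"]) simp
qed


lemma exist_eigen:
  fixes m u p q r z :: "'a::field"
  assumes u: "u \<noteq> 0" and d: "m^2 - 4*u \<noteq> 0" and D: "p*z - q*r \<noteq> 0"
    and N: "r^2 - m*p*r + u*p^2 = 0"
  shows "\<exists>a b al r0. a*(a+m*b)+u*b*b \<noteq> 0 \<and> al^2 - m*al + u = 0 \<and>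
     r0 = mat2 a b (-u*b) (a+m*b) ** mat2 p q r z \<and>
     (r0 = mat2 1 (inverse u * al) al 1 \<or> (\<exists>x. x \<noteq> 0 \<and> r0 = mat2 1 x al 0))"
proof -
  have p: "p \<noteq> 0"
  proof
    assume "p = 0"
    then have "r = 0" using N by simp
    then show False using D \<open>p = 0\<close> by simp
  qed
  define al where "al = r/p"
  have pal: "p*al = r" unfolding al_def using p by simp
  have rt: "al^2 - m*al + u = 0"
  proof -
    have "p^2 * (al^2 - m*al + u) = (p*al)^2 - m*p*(p*al) + u*p^2"
      by (simp add: algebra_simps power2_eq_square)
    then have "p^2 * (al^2 - m*al + u) = 0" using N pal by simp
    then show ?thesis using p by simp
  qed  note rf = root_facts[OF u d rt]
  define be where "be = m - al"
  have m: "m = al + be" and uu: "u = al*be" using rf(3) be_def by simp_all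
  have be: "be \<noteq> 0" "be - al \<noteq> 0" using rf be_def by simp_all
  have r: "r = p*al" unfolding al_def using p by simp
  define w where "w = (z - al*q)/(be - al)"
  define t where "t = q - w"
  have "p*z - q*r = p*(z - al*q)" unfolding r by (simp add: algebra_simps)
  then have "z - al*q \<noteq> 0" using D by auto
  then have w: "w \<noteq> 0" unfolding w_def using be by simp
  have q: "q = t + w" unfolding t_def by simp
  have "w*(be-al) = z - al*q" unfolding w_def using be by simp
  then have z: "z = t*al + w*be" unfolding t_def by (simp add: algebra_simps)
  define lam where "lam = 1/p"
  define mu where "mu = (if t = 0 then 1/(be*w) else -(t*al)/(p*w*be))"
  have mu: "mu \<noteq> 0" unfolding mu_def using w be p rf by auto
  define b where "b = (mu - lam)/(be - al)"
  define a where "a = lam - b*al"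
  have ea: "a + b*al = lam" unfolding a_def by simp
  have bb: "b*(be-al) = mu - lam" unfolding b_def using be by simp
  have "a + b*be = lam + b*(be-al)" by (simp add: a_def algebra_simps)
  then have eb: "a + b*be = mu" using bb by simp
  have dh: "a*(a+m*b)+u*b*b \<noteq> 0"
    using detroot[OF rt, of a b] ea eb mu p lam_def be_def by simp
  have prod: "mat2 a b (-u*b) (a+m*b) ** mat2 p q r z =
    mat2 (lam*p) (lam*t+mu*w) (lam*p*al) (lam*t*al + mu*w*be)"
    unfolding m uu q r z eigact ea eb by simp
  show ?thesis
  proof (cases "t = 0")
    case True
    have mw: "mu*w = 1/be" unfolding mu_def using True w be by simp
    have "inverse u * al = 1/be" unfolding uu using rf(1) be by (simp add: field_simps)
    moreover have "mu*w*be = 1" using mw be by simp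
    ultimately have "mat2 (lam*p) (lam*t+mu*w) (lam*p*al) (lam*t*al + mu*w*be) = mat2 1 (inverse u * al) al 1"
      unfolding mat2_eq_iff lam_def using True p mw by simp
    then have "a*(a+m*b)+u*b*b \<noteq> 0 \<and> al^2 - m*al + u = 0 \<and>
     mat2 1 (inverse u * al) al 1 = mat2 a b (-u*b) (a+m*b) ** mat2 p q r z \<and>
     (mat2 1 (inverse u * al) al 1 = mat2 1 (inverse u * al) al 1 \<or> (\<exists>x. x \<noteq> 0 \<and> mat2 1 (inverse u * al) al 1 = mat2 1 x al 0))"
      using dh rt prod by simp
    then show ?thesis by (intro exI) assumption
  next
    case False
    have mw: "mu*w*be = -(t*al)/p" unfolding mu_def using False w be p by simp
    have mw2: "mu*w = -(t*al)/(p*be)" unfolding mu_def using False w be p by simp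
    have "lam*t*al + mu*w*be = 0" unfolding mw lam_def by simp
    moreover have "lam*t+mu*w = t*(be-al)/(p*be)" unfolding mw2 lam_def using p be
      by (simp add: field_simps)
    ultimately have "mat2 (lam*p) (lam*t+mu*w) (lam*p*al) (lam*t*al + mu*w*be) = mat2 1 (t*(be-al)/(p*be)) al 0"
      unfolding mat2_eq_iff lam_def using p by simp
    moreover have "t*(be-al)/(p*be) \<noteq> 0" using False p be by simp
    then have "\<exists>x. x \<noteq> 0 \<and> mat2 1 (t*(be-al)/(p*be)) al 0 = mat2 1 x al 0" by blast
    ultimately have "a*(a+m*b)+u*b*b \<noteq> 0 \<and> al^2 - m*al + u = 0 \<and>
     mat2 1 (t*(be-al)/(p*be)) al 0 = mat2 a b (-u*b) (a+m*b) ** mat2 p q r z \<and>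
     (mat2 1 (t*(be-al)/(p*be)) al 0 = mat2 1 (inverse u * al) al 1 \<or> (\<exists>x. x \<noteq> 0 \<and> mat2 1 (t*(be-al)/(p*be)) al 0 = mat2 1 x al 0))"
      using dh rt prod by auto
    then show ?thesis by (intro exI) assumption
  qed
qed


theorem lemma3p5:
  fixes m u :: "'a::field_char_0"
  assumes "u \<noteq> 0" and "m ^ 2 - 4 * u \<noteq> 0"
  defines "Roots \<equiv> {a. a ^ 2 - m * a + u = 0}"
  defines "R3 \<equiv> {mat2 1 x 0 y | x y. y \<noteq> 0}"
  shows "(Roots \<noteq> {} \<longrightarrow>
            is_rep_set (centralizer_GL2 (gamma_mu m u))
              ({mat2 1 (inverse u * a) a 1 | a. a \<in> Roots}
               \<union> {mat2 1 x a 0 | x a. x \<noteq> 0 \<and> a \<in> Roots} \<union> R3))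
       \<and> (Roots = {} \<longrightarrow> is_rep_set (centralizer_GL2 (gamma_mu m u)) R3)"
proof -
  note u = assms(1) and d = assms(2)
  define T1 where "T1 = {mat2 1 (inverse u * a) a 1 | a. a \<in> Roots}"
  define T2 where "T2 = {mat2 1 x a 0 | x a. x \<noteq> 0 \<and> a \<in> Roots}"
  have sub: "T1 \<union> T2 \<union> R3 \<subseteq> GL2"
  proof
    fix g assume "g \<in> T1 \<union> T2 \<union> R3"
    then consider (A) al where "g = mat2 1 (inverse u * al) al 1" "al^2 - m*al + u = 0"
      | (B) x al where "g = mat2 1 x al 0" "x \<noteq> 0" "al^2 - m*al + u = 0"
      | (C) x y where "g = mat2 1 x 0 y" "y \<noteq> 0"
      unfolding T1_def T2_def R3_def Roots_def by blast
    then show "g \<in> GL2"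
    proof cases
      case (A al)
      note rf = root_facts[OF u d A(2)]
      have "1 * 1 - inverse u * al * al = al * ((m - al) - al) / u"
        using rf(3) u by (simp add: field_simps)
      moreover have "al * ((m - al) - al) / u \<noteq> 0" using rf u by simp
      ultimately show ?thesis using A by (simp add: mat2_GL2)
    next
      case (B x al)
      note rf = root_facts[OF u d B(3)]
      show ?thesis using B rf by (simp add: mat2_GL2)
    next
      case (C x y)
      then show ?thesis by (simp add: mat2_GL2)
    qed
  qed
  have main: "is_rep_set (centralizer_GL2 (gamma_mu m u)) (T1 \<union> T2 \<union> R3)"
  proof (rule rep_set_intro[OF sub])
    fix g :: "'a^2^2" assume g: "g \<in> GL2"
    obtain p q r z where gd: "g = mat2 p q r z" using mat2_eta by blast
    have D: "p*z - q*r \<noteq> 0" using g gd mat2_GL2 by auto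
    show "\<exists>r\<in>T1 \<union> T2 \<union> R3. \<exists>h\<in>centralizer_GL2 (gamma_mu m u). r = h ** g"
    proof (cases "r^2 - m*p*r + u*p^2 = 0")
      case True
      from exist_eigen[OF u d D True] obtain a b al r0 where
        e: "a*(a+m*b)+u*b*b \<noteq> 0" "al^2 - m*al + u = 0"
           "r0 = mat2 a b (-u*b) (a+m*b) ** mat2 p q r z"
           "r0 = mat2 1 (inverse u * al) al 1 \<or> (\<exists>x. x \<noteq> 0 \<and> r0 = mat2 1 x al 0)" by blast
      have alR: "al \<in> Roots" unfolding Roots_def using e(2) by simp
      have "r0 \<in> T1 \<or> r0 \<in> T2"
      proof (cases "r0 = mat2 1 (inverse u * al) al 1")
        case True
        then have "r0 \<in> T1" unfolding T1_def using alR by (intro CollectI exI[of _ al] conjI)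
        then show ?thesis ..
      next
        case False
        then obtain x where x: "x \<noteq> 0" "r0 = mat2 1 x al 0" using e(4) by blast
        then have "r0 \<in> T2" unfolding T2_def using alR
          by (intro CollectI exI[of _ x] exI[of _ al] conjI)
        then show ?thesis ..
      qed
      then have "r0 \<in> T1 \<union> T2 \<union> R3" by blast
      moreover have "mat2 a b (-u*b) (a+m*b) \<in> centralizer_GL2 (gamma_mu m u)"
        unfolding centralizer_iff by (rule exI[of _ a], rule exI[of _ b], simp add: e(1))
      ultimately show ?thesis using e(3) gd by blast
    next
      case False
      from exist_generic[OF u D False] obtain a b x y where
        e: "a*(a+m*b)+u*b*b \<noteq> 0" "y \<noteq> 0" "mat2 1 x 0 y = mat2 a b (-u*b) (a+m*b) ** mat2 p q r z"
        by blast
      have "mat2 1 x 0 y \<in> T1 \<union> T2 \<union> R3" using e(2) unfolding R3_def by blast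
      moreover have "mat2 a b (-u*b) (a+m*b) \<in> centralizer_GL2 (gamma_mu m u)"
        unfolding centralizer_iff by (rule exI[of _ a], rule exI[of _ b], simp add: e(1))
      ultimately show ?thesis using e(3) gd by blast
    qed
  next
    fix r1 r2 h
    assume r1: "r1 \<in> T1 \<union> T2 \<union> R3" and r2: "r2 \<in> T1 \<union> T2 \<union> R3"
      and h: "h \<in> centralizer_GL2 (gamma_mu m u)" and eq: "r1 = h ** r2"
    obtain a b where hab: "h = mat2 a b (-u*b) (a+m*b)" "a*(a+m*b) + u*b*b \<noteq> 0"
      using h centralizer_iff by blast
    obtain y1 c z1 where r1f: "r1 = mat2 1 y1 c z1"
      and t1: "c = 0 \<or> (c^2 - m*c + u = 0 \<and> c \<noteq> 0 \<and> ((y1 = inverse u * c \<and> z1 = 1) \<or> (y1 \<noteq> 0 \<and> z1 = 0)))"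
    proof -
      from r1 consider (A) al where "r1 = mat2 1 (inverse u * al) al 1" "al^2 - m*al + u = 0"
        | (B) x al where "r1 = mat2 1 x al 0" "x \<noteq> 0" "al^2 - m*al + u = 0"
        | (C) x y where "r1 = mat2 1 x 0 y" "y \<noteq> 0"
        unfolding T1_def T2_def R3_def Roots_def by blast
      then show ?thesis
      proof cases
        case (A al) then show ?thesis using that root_facts[OF u d A(2)] by blast
      next
        case (B x al) then show ?thesis using that root_facts[OF u d B(3)] by blast
      next
        case (C x y) then show ?thesis using that by blast
      qed
    qed
    from r2 consider (A) al where "r2 = mat2 1 (inverse u * al) al 1" "al^2 - m*al + u = 0"
      | (B) x al where "r2 = mat2 1 x al 0" "x \<noteq> 0" "al^2 - m*al + u = 0"
      | (C) x y where "r2 = mat2 1 x 0 y" "y \<noteq> 0"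
      unfolding T1_def T2_def R3_def Roots_def by blast
    then show "r1 = r2"
    proof cases
      case (A al)
      show ?thesis
        by (rule uniqBC[OF u d hab(2) A(2) eq[unfolded hab(1)] A(1) _ r1f])
           (use t1 in auto)
    next
      case (B x al)
      show ?thesis
        by (rule uniqBC[OF u d hab(2) B(3) eq[unfolded hab(1)] B(1) _ r1f])
           (use t1 B(2) in auto)
    next
      case (C x y)
      show ?thesis using uniqA[OF u hab(2) eq[unfolded hab(1) C(1)] r1f] t1 C(1) by blast
    qed
  qed
  have "Roots = {} \<Longrightarrow> T1 \<union> T2 \<union> R3 = R3" unfolding T1_def T2_def by auto
  then show ?thesis using main unfolding T1_def T2_def by auto
qed

end
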